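(* Let $\mathcal{F}=\{f_1,\dots,f_{M_0},f_{M_0+1},\dots,f_{M_0+n}\}$ be homogeneous polynomials on $\mathbb{R}^n$ with $f_{M_0+j}(z)=z_j$ for $j=1,\dots,n$ (not necessarily satisfying any further property). Suppose there exists a set $V\subset\mathbb{R}^n$ with $\{0\}\subsetneq V$ such that for every $y\in\mathbb{R}^{M_0+n}\setminus\{0\}$ the restriction to $V$ of $\sum_{k=1}^{M_0+n}y_kf_k$ is either identically zero or changes sign (takes both strictly positive and strictly negative values) on $V$. Then there exists a non-trivial (non-Dirac) $\mu\in\mathbb{M}^{pc}_{\mathcal{F}}(0)$.
   Context: $\mathbb{M}^{pc}_{\mathcal{F}}(0)$ is the set of probability measures $\mu$ on $\mathbb{R}^n$ with $\int z\,d\mu=0$ and $\int f\,d\mu=f(\int z\,d\mu)$ for all $f\in\mathcal{F}$. *)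

theory Defs
  imports "HOL-Probability.Probability"
begin

definition hom_poly :: "nat \<Rightarrow> (real^'n \<Rightarrow> real) \<Rightarrow> bool" where
  "hom_poly d f \<longleftrightarrow>
     (\<exists>(A :: ('n \<Rightarrow> nat) set) (c :: ('n \<Rightarrow> nat) \<Rightarrow> real).
        finite A \<and> (\<forall>\<alpha>\<in>A. (\<Sum>i\<in>UNIV. \<alpha> i) = d) \<and>
        (\<forall>z. f z = (\<Sum>\<alpha>\<in>A. c \<alpha> * (\<Prod>i\<in>UNIV. (z $ i) ^ (\<alpha> i)))))"

definition homogeneous_polynomial :: "(real^'n \<Rightarrow> real) \<Rightarrow> bool" where
  "homogeneous_polynomial f \<longleftrightarrow> (\<exists>d. hom_poly d f)"

definition Mpc :: "(real^'n \<Rightarrow> real) set \<Rightarrow> (real^'n) measure set" where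
  "Mpc F = {\<mu>. prob_space \<mu> \<and> sets \<mu> = sets borel \<and>
              integrable \<mu> (\<lambda>z. z) \<and> (\<integral>z. z \<partial>\<mu>) = 0 \<and>
              (\<forall>f\<in>F. integrable \<mu> f \<and> (\<integral>z. f z \<partial>\<mu>) = f (\<integral>z. z \<partial>\<mu>))}"

end

theory Submission
  imports Defs
begin

definition HH :: "'i set \<Rightarrow> ('i \<Rightarrow> real) set \<Rightarrow> bool" where
  "HH I S \<longleftrightarrow> (\<forall>c. (\<forall>s\<in>S. (\<Sum>i\<in>I. c i * s i) = 0) \<or> (\<exists>s\<in>S. (\<Sum>i\<in>I. c i * s i) < 0))"

definition CC :: "('i \<Rightarrow> real) set \<Rightarrow> bool" where
  "CC S \<longleftrightarrow> (\<forall>x\<in>S. \<forall>y\<in>S. \<forall>u::real. 0 \<le> u \<and> u \<le> 1 \<longrightarrow> (\<lambda>i. u * x i + (1-u) * y i) \<in> S)"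

lemma core:
  assumes "finite I"
  shows "\<forall>S. CC S \<longrightarrow> S \<noteq> {} \<longrightarrow> HH I S \<longrightarrow> (\<exists>s\<in>S. \<forall>i\<in>I. s i = 0)"
  using assms
proof (induction I rule: finite_induct)
  case empty
  then show ?case by auto
next
  case (insert m I)
  show ?case
  proof (intro allI impI)
    fix S :: "('a \<Rightarrow> real) set"
    assume cS: "CC S" and ne: "S \<noteq> {}" and hS: "HH (insert m I) S"
    have sumins: "(\<Sum>i\<in>insert m I. c i * s i) = c m * s m + (\<Sum>i\<in>I. c i * s i)" for c s
      using insert by simp
    show "\<exists>s\<in>S. \<forall>i\<in>insert m I. s i = 0"
    proof (cases "\<forall>s\<in>S. s m = 0")
      case True
      have "HH I S" unfolding HH_def
      proof
        fix c
        have eq: "\<And>s. s \<in> S \<Longrightarrow> (\<Sum>i\<in>insert m I. c i * s i) = (\<Sum>i\<in>I. c i * s i)"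
          using True by (simp add: sumins)
        from hS[unfolded HH_def, rule_format, of c]
        show "(\<forall>s\<in>S. (\<Sum>i\<in>I. c i * s i) = 0) \<or> (\<exists>s\<in>S. (\<Sum>i\<in>I. c i * s i) < 0)"
        proof
          assume "\<forall>s\<in>S. (\<Sum>i\<in>insert m I. c i * s i) = 0" then show ?thesis using eq by simp
        next
          assume "\<exists>s\<in>S. (\<Sum>i\<in>insert m I. c i * s i) < 0" then show ?thesis using eq by force
        qed
      qed
      then obtain s where "s \<in> S" "\<forall>i\<in>I. s i = 0" using insert.IH cS ne by blast
      then show ?thesis using True by auto
    next
      case False
      then obtain s0 where s0: "s0 \<in> S" "s0 m \<noteq> 0" by auto
      let ?e = "\<lambda>i. if i = m then (1::real) else 0"
      have se: "(\<Sum>i\<in>insert m I. ?e i * s i) = s m" for s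
        using insert by (simp add: sumins, intro sum.neutral, auto)
      have se2: "(\<Sum>i\<in>insert m I. - ?e i * s i) = - s m" for s
        using insert by (simp add: sumins, intro sum.neutral, auto)
      from hS[unfolded HH_def, rule_format, of ?e] s0 obtain q where q: "q \<in> S" "q m < 0"
        unfolding se by auto
      from hS[unfolded HH_def, rule_format, of "\<lambda>i. - ?e i"] s0 obtain p where p: "p \<in> S" "p m > 0"
        unfolding se2 by auto
      define comb where "comb p q = (\<lambda>i. (- q m / (p m - q m)) * p i + (1 - (- q m / (p m - q m))) * q (i::'a))" for p q :: "'a \<Rightarrow> real"
      have comb_in: "comb p q \<in> S" "comb p q m = 0" if "p \<in> S" "q \<in> S" "p m > 0" "q m < 0" for p q
      proof -
        have "0 \<le> - q m / (p m - q m)" "- q m / (p m - q m) \<le> 1" using that by (auto simp: field_simps)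
        then show "comb p q \<in> S" using cS that unfolding CC_def comb_def by blast
        show "comb p q m = 0" using that unfolding comb_def by (simp add: field_simps)
      qed
      let ?S' = "{s\<in>S. s m = 0}"
      have cS': "CC ?S'" using cS unfolding CC_def by (auto simp: algebra_simps)
      have ne': "?S' \<noteq> {}" using comb_in[OF p(1) q(1) p(2) q(2)] by blast
      have hS': "HH I ?S'" unfolding HH_def
      proof (rule allI, rule ccontr)
        fix c :: "'a \<Rightarrow> real"
        let ?L = "\<lambda>s. (\<Sum>i\<in>I. c i * s i)"
        assume "\<not> ((\<forall>s\<in>?S'. ?L s = 0) \<or> (\<exists>s\<in>?S'. ?L s < 0))"
        then obtain s1 where s1: "s1 \<in> ?S'" "?L s1 \<noteq> 0" and nn: "\<forall>s\<in>?S'. ?L s \<ge> 0"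
          by (auto simp: not_less)
        have Lcomb: "?L (comb p q) = (- q m / (p m - q m)) * ?L p + (1 - (- q m / (p m - q m))) * ?L q" for p q
        proof -
          have lin: "?L (\<lambda>i. a * x i + b * y i) = a * ?L x + b * ?L y" for a b and x y :: "'a \<Rightarrow> real"
            by (simp add: distrib_left sum.distrib sum_distrib_left mult.left_commute)
          show ?thesis unfolding comb_def by (rule lin)
        qed
        have key: "- ?L p / p m \<le> ?L q / (- q m)" if "p \<in> S" "q \<in> S" "p m > 0" "q m < 0" for p q
        proof -
          have "?L (comb p q) \<ge> 0" using nn comb_in[OF that] by auto
          then have "0 \<le> (- q m / (p m - q m)) * ?L p + (p m / (p m - q m)) * ?L q"
            unfolding Lcomb using that by (simp add: field_simps)
          then have "0 \<le> (p m - q m) * ((- q m / (p m - q m)) * ?L p + (p m / (p m - q m)) * ?L q)"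
            using that by simp
          also have "\<dots> = (- q m) * ?L p + p m * ?L q"
          proof -
            have gen: "d \<noteq> 0 \<Longrightarrow> d*(a/d*X + b/d*Y) = a*X + b*Y" for d a b X Y :: real
              by (simp add: field_simps)
            show ?thesis using that by (intro gen) auto
          qed
          finally have "0 \<le> (- q m) * ?L p + p m * ?L q" .
          then show ?thesis using that by (simp add: field_simps)
        qed
        define LO where "LO = {- ?L p / p m | p. p \<in> S \<and> p m > 0}"
        define t where "t = Sup LO"
        have LOne: "LO \<noteq> {}" using p unfolding LO_def by auto
        have bdd: "bdd_above LO" unfolding LO_def using key[OF _ q(1) _ q(2)]
          by (auto intro!: bdd_aboveI[of _ "?L q / (- q m)"])
        have lo: "- ?L p / p m \<le> t" if "p \<in> S" "p m > 0" for p
          unfolding t_def using that bdd by (intro cSup_upper) (auto simp: LO_def)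
        have hi: "t \<le> ?L q / (- q m)" if "q \<in> S" "q m < 0" for q
          unfolding t_def using that LOne key by (intro cSup_least) (auto simp: LO_def)
        let ?c = "c(m := t)"
        have sc: "(\<Sum>i\<in>insert m I. ?c i * s i) = t * s m + ?L s" for s
          using insert by (simp add: sumins, intro sum.cong, auto)
        have pos: "(\<Sum>i\<in>insert m I. ?c i * s i) \<ge> 0" if "s \<in> S" for s
        proof -
          consider "s m > 0" | "s m < 0" | "s m = 0" by linarith
          then show ?thesis
          proof cases
            case 1 with lo[OF that 1] show ?thesis unfolding sc by (simp add: field_simps)
          next
            case 2 with hi[OF that 2] show ?thesis unfolding sc by (simp add: field_simps)
          next
            case 3 with nn that show ?thesis unfolding sc by auto
          qed
        qed
        from hS[unfolded HH_def, rule_format, of ?c] pos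
        have "\<forall>s\<in>S. (\<Sum>i\<in>insert m I. ?c i * s i) = 0" by (meson not_le)
        then have "?L s1 = 0" using s1 unfolding sc by auto
        then show False using s1 by auto
      qed
      obtain s where "s \<in> ?S'" "\<forall>i\<in>I. s i = 0" using insert.IH cS' ne' hS' by blast
      then show ?thesis by auto
    qed
  qed
qed


lemma hom_pos_zero:
  assumes "hom_poly d (f :: real^'n \<Rightarrow> real)" "d > 0" shows "f 0 = 0"
proof -
  from assms(1) obtain A c where A: "finite A" "\<forall>\<alpha>\<in>A. (\<Sum>i\<in>UNIV. \<alpha> i) = d"
    "\<forall>z. f z = (\<Sum>\<alpha>\<in>A. c \<alpha> * (\<Prod>i\<in>UNIV. (z $ i) ^ (\<alpha> i)))" unfolding hom_poly_def by blast
  have P: "(\<Prod>i\<in>UNIV. (0::real) ^ (\<alpha> i)) = 0" if "\<alpha> \<in> A" for \<alpha>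
  proof -
    have "(\<Sum>i\<in>UNIV. \<alpha> i) \<noteq> 0" using A that assms(2) by auto
    then obtain i where "\<alpha> i \<noteq> 0" by (meson sum.neutral)
    then show ?thesis by (intro prod_zero) auto
  qed
  then show ?thesis using A by (simp add: P)
qed

lemma hom_zero_const:
  assumes "hom_poly 0 (f :: real^'n \<Rightarrow> real)" shows "f z = f 0"
proof -
  from assms(1) obtain A c where A: "finite A" "\<forall>\<alpha>\<in>A. (\<Sum>i\<in>UNIV. \<alpha> i) = 0"
    "\<forall>z. f z = (\<Sum>\<alpha>\<in>A. c \<alpha> * (\<Prod>i\<in>UNIV. (z $ i) ^ (\<alpha> i)))" unfolding hom_poly_def by blast
  have "(\<Prod>i\<in>UNIV. (y $ i) ^ (\<alpha> i)) = 1" if "\<alpha> \<in> A" for \<alpha> and y :: "real^'n"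
  proof -
    have "\<forall>i. \<alpha> i = 0" using A that by simp
    then show ?thesis by simp
  qed
  then show ?thesis using A by simp
qed

lemma hom_meas:
  assumes "homogeneous_polynomial (f :: real^'n \<Rightarrow> real)" shows "f \<in> borel_measurable borel"
proof -
  from assms obtain d A c where A: "finite A"
    "\<forall>z. f z = (\<Sum>\<alpha>\<in>A. c \<alpha> * (\<Prod>i\<in>UNIV. (z $ i) ^ (\<alpha> i)))"
    unfolding homogeneous_polynomial_def hom_poly_def by blast
  have "f = (\<lambda>z. \<Sum>\<alpha>\<in>A. c \<alpha> * (\<Prod>i\<in>UNIV. (z $ i) ^ (\<alpha> i)))" using A by auto
  also have "\<dots> \<in> borel_measurable borel"
    by (intro borel_measurable_continuous_onI continuous_intros)
  finally show ?thesis .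
qed

theorem lemma2:
  fixes M0 :: nat
    and g :: "nat \<Rightarrow> (real^'n \<Rightarrow> real)"
    and V :: "(real^'n) set"
  assumes hom: "\<forall>k<M0. homogeneous_polynomial (g k)"
    and V0: "0 \<in> V" and Vne: "V \<noteq> {0}"
    and sign: "\<forall>(a :: nat \<Rightarrow> real) (b :: real^'n).
       (\<exists>k<M0. a k \<noteq> 0) \<or> b \<noteq> 0 \<longrightarrow>
       (let h = (\<lambda>z. (\<Sum>k<M0. a k * g k z) + (\<Sum>j\<in>UNIV. b $ j * z $ j)) in
          (\<forall>z\<in>V. h z = 0) \<or> ((\<exists>z\<in>V. h z > 0) \<and> (\<exists>z\<in>V. h z < 0)))"
  shows "\<exists>\<mu>\<in>Mpc (g ` {..<M0} \<union> range (\<lambda>j z. z $ j)). \<not> (\<exists>x. \<mu> = return borel x)"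
proof -
  have g0: "g k 0 = 0" if k: "k < M0" for k
  proof -
    obtain d where d: "hom_poly d (g k)" using hom k unfolding homogeneous_polynomial_def by blast
    show ?thesis
    proof (cases "d > 0")
      case True then show ?thesis using hom_pos_zero[OF d] by simp
    next
      case False
      then have cst: "g k z = g k 0" for z using hom_zero_const[of "g k"] d by simp
      let ?a = "\<lambda>j. if j = k then (1::real) else 0"
      have hz: "(\<Sum>kk<M0. ?a kk * g kk z) + (\<Sum>j\<in>UNIV. (0::real^'n) $ j * z $ j) = g k 0" for z
      proof -
        have "(\<Sum>kk<M0. ?a kk * g kk z) = (\<Sum>kk<M0. if kk = k then g k z else 0)"
          by (rule sum.cong) auto
        then show ?thesis using k cst by simp
      qed
      have "(\<exists>kk<M0. ?a kk \<noteq> 0)" using k by auto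
      with sign[rule_format, of ?a 0] have
        "(\<forall>z\<in>V. g k 0 = 0) \<or> ((\<exists>z\<in>V. g k 0 > 0) \<and> (\<exists>z\<in>V. g k 0 < 0))"
        unfolding Let_def hz by blast
      then show ?thesis using V0 by auto
    qed
  qed
  define \<Phi> :: "real^'n \<Rightarrow> nat + 'n \<Rightarrow> real" where
    "\<Phi> z = (\<lambda>i. case i of Inl k \<Rightarrow> g k z | Inr j \<Rightarrow> z $ j)" for z
  define I :: "(nat + 'n) set" where "I = Inl ` {..<M0} \<union> Inr ` UNIV"
  have finI: "finite I" unfolding I_def by simp
  have sumI: "(\<Sum>i\<in>I. c i * x i) = (\<Sum>k<M0. c (Inl k) * x (Inl k)) + (\<Sum>j\<in>UNIV. c (Inr j) * x (Inr j))"
    for c x :: "nat + 'n \<Rightarrow> real"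
    unfolding I_def
    by (subst sum.union_disjoint) (auto simp: sum.reindex)
  define C where "C = {x. \<exists>T w. finite T \<and> T \<subseteq> V - {0} \<and> (\<forall>t\<in>T. 0 \<le> w t) \<and> sum w T = 1 \<and>
      x = (\<lambda>i. \<Sum>t\<in>T. w t * \<Phi> t i)}"
  have lin: "(\<Sum>i\<in>I. c i * (\<Sum>t\<in>T. w t * \<Phi> t i)) = (\<Sum>t\<in>T. w t * (\<Sum>i\<in>I. c i * \<Phi> t i))"
    for c w and T :: "(real^'n) set"
    by (simp add: sum_distrib_left mult.left_commute sum.swap[of _ T])
  have Cne: "C \<noteq> {}"
  proof -
    obtain z where z: "z \<in> V" "z \<noteq> 0" using V0 Vne by auto
    then have "\<Phi> z \<in> C" unfolding C_def by (intro CollectI exI[of _ "{z}"] exI[of _ "\<lambda>_. 1"]) auto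
    then show ?thesis by auto
  qed
  have ifsum: "(\<Sum>t\<in>T. (if t \<in> T1 then f t else 0)) = sum f T1" if "finite T" "T1 \<subseteq> T"
    for T T1 and f :: "real^'n \<Rightarrow> real"
    using that by (simp add: sum.If_cases Int_absorb1)
  have CC: "CC C" unfolding CC_def
  proof (intro ballI allI impI)
    fix x y and u :: real
    assume "x \<in> C" "y \<in> C" and u: "0 \<le> u \<and> u \<le> 1"
    then obtain T1 w1 T2 w2 where 1: "finite T1" "T1 \<subseteq> V - {0}" "\<forall>t\<in>T1. 0 \<le> w1 t" "sum w1 T1 = 1"
      "x = (\<lambda>i. \<Sum>t\<in>T1. w1 t * \<Phi> t i)"
      and 2: "finite T2" "T2 \<subseteq> V - {0}" "\<forall>t\<in>T2. 0 \<le> w2 t" "sum w2 T2 = 1"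
      "y = (\<lambda>i. \<Sum>t\<in>T2. w2 t * \<Phi> t i)" unfolding C_def by blast
    define w where "w t = u * (if t \<in> T1 then w1 t else 0) + (1 - u) * (if t \<in> T2 then w2 t else 0)" for t
    have fT: "finite (T1 \<union> T2)" using 1 2 by simp
    have "sum w (T1 \<union> T2) = u * sum w1 T1 + (1 - u) * sum w2 T2"
      unfolding w_def sum.distrib sum_distrib_left[symmetric]
      using ifsum[OF fT, of T1] ifsum[OF fT, of T2] by simp
    moreover have "(\<lambda>i. u * x i + (1 - u) * y i) = (\<lambda>i. \<Sum>t\<in>T1 \<union> T2. w t * \<Phi> t i)"
    proof
      fix i
      have a: "(\<Sum>t\<in>T1 \<union> T2. (if t \<in> T1 then w1 t else 0) * \<Phi> t i) = (\<Sum>t\<in>T1. w1 t * \<Phi> t i)"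
      proof -
        have "(\<Sum>t\<in>T1 \<union> T2. (if t \<in> T1 then w1 t else 0) * \<Phi> t i) = (\<Sum>t\<in>T1 \<union> T2. if t \<in> T1 then w1 t * \<Phi> t i else 0)"
          by (rule sum.cong) auto
        then show ?thesis using ifsum[OF fT, of T1 "\<lambda>t. w1 t * \<Phi> t i"] by simp
      qed
      have b: "(\<Sum>t\<in>T1 \<union> T2. (if t \<in> T2 then w2 t else 0) * \<Phi> t i) = (\<Sum>t\<in>T2. w2 t * \<Phi> t i)"
      proof -
        have "(\<Sum>t\<in>T1 \<union> T2. (if t \<in> T2 then w2 t else 0) * \<Phi> t i) = (\<Sum>t\<in>T1 \<union> T2. if t \<in> T2 then w2 t * \<Phi> t i else 0)"
          by (rule sum.cong) auto
        then show ?thesis using ifsum[OF fT, of T2 "\<lambda>t. w2 t * \<Phi> t i"] by simp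
      qed
      show "u * x i + (1 - u) * y i = (\<Sum>t\<in>T1 \<union> T2. w t * \<Phi> t i)"
        unfolding w_def distrib_right sum.distrib mult.assoc sum_distrib_left[symmetric] a b
        using 1 2 by simp
    qed
    moreover have "\<forall>t\<in>T1 \<union> T2. 0 \<le> w t" using 1 2 u unfolding w_def by auto
    ultimately show "(\<lambda>i. u * x i + (1 - u) * y i) \<in> C" unfolding C_def using fT 1 2 u
      by (intro CollectI exI[of _ "T1 \<union> T2"] exI[of _ w]) auto
  qed
  have HC: "HH I C" unfolding HH_def
  proof
    fix c :: "nat + 'n \<Rightarrow> real"
    define a where "a k = c (Inl k)" for k
    define b :: "real^'n" where "b = (\<chi> j. c (Inr j))"
    define h where "h z = (\<Sum>k<M0. a k * g k z) + (\<Sum>j\<in>UNIV. b $ j * z $ j)" for z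
    have hI: "(\<Sum>i\<in>I. c i * \<Phi> z i) = h z" for z
      unfolding sumI h_def a_def b_def \<Phi>_def by simp
    have h0: "h 0 = 0" unfolding h_def using g0 by simp
    show "(\<forall>s\<in>C. (\<Sum>i\<in>I. c i * s i) = 0) \<or> (\<exists>s\<in>C. (\<Sum>i\<in>I. c i * s i) < 0)"
    proof (cases "(\<exists>k<M0. a k \<noteq> 0) \<or> b \<noteq> 0")
      case True
      with sign[rule_format, of a b] have
        "(\<forall>z\<in>V. h z = 0) \<or> ((\<exists>z\<in>V. h z > 0) \<and> (\<exists>z\<in>V. h z < 0))"
        unfolding Let_def h_def by blast
      then show ?thesis
      proof
        assume hz: "\<forall>z\<in>V. h z = 0"
        have "(\<Sum>i\<in>I. c i * s i) = 0" if "s \<in> C" for s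
        proof -
          from that obtain T w where T: "T \<subseteq> V - {0}" "s = (\<lambda>i. \<Sum>t\<in>T. w t * \<Phi> t i)"
            unfolding C_def by blast
          show ?thesis unfolding T(2) lin hI using hz T(1) by (auto intro!: sum.neutral)
        qed
        then show ?thesis by blast
      next
        assume "(\<exists>z\<in>V. h z > 0) \<and> (\<exists>z\<in>V. h z < 0)"
        then obtain z where z: "z \<in> V" "h z < 0" by auto
        then have "z \<noteq> 0" using h0 by auto
        then have "\<Phi> z \<in> C" using z unfolding C_def
          by (intro CollectI exI[of _ "{z}"] exI[of _ "\<lambda>_. 1"]) auto
        then show ?thesis using z hI by (metis (no_types))
      qed
    next
      case False
      then have hz: "h z = 0" for z unfolding h_def by simp
      have "(\<Sum>i\<in>I. c i * s i) = 0" if "s \<in> C" for s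
      proof -
        from that obtain T w where T: "T \<subseteq> V - {0}" "s = (\<lambda>i. \<Sum>t\<in>T. w t * \<Phi> t i)"
          unfolding C_def by blast
        show ?thesis unfolding T(2) lin hI using hz by simp
      qed
      then show ?thesis by blast
    qed
  qed
  obtain x where x: "x \<in> C" "\<forall>i\<in>I. x i = 0"
    using core[OF finI] CC Cne HC by blast
  then obtain T w where T: "finite T" "T \<subseteq> V - {0}" "\<forall>t\<in>T. 0 \<le> w t" "sum w T = 1"
    "x = (\<lambda>i. \<Sum>t\<in>T. w t * \<Phi> t i)" unfolding C_def by blast
  have gz: "(\<Sum>t\<in>T. w t * g k t) = 0" if "k < M0" for k
  proof -
    have "x (Inl k) = 0" using x(2) that unfolding I_def by auto
    then show ?thesis unfolding T(5) \<Phi>_def by simp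
  qed
  have zz: "(\<Sum>t\<in>T. w t *\<^sub>R t) = 0"
  proof -
    have "x (Inr j) = 0" for j using x(2) unfolding I_def by auto
    then show ?thesis unfolding T(5) \<Phi>_def by (simp add: vec_eq_iff)
  qed
  define f where "f t = (if t \<in> T then w t else 0)" for t
  have fnn: "\<And>t. 0 \<le> f t" unfolding f_def using T(3) by auto
  have fint: "(\<integral>\<^sup>+t. ennreal (f t) \<partial>count_space UNIV) = 1"
  proof -
    have "(\<integral>\<^sup>+t. ennreal (f t) \<partial>count_space UNIV) = (\<Sum>t\<in>T. ennreal (f t))"
      by (rule nn_integral_count_space') (use T(1) in \<open>auto simp: f_def\<close>)
    also have "\<dots> = ennreal (sum f T)" using fnn by simp
    also have "sum f T = sum w T" unfolding f_def by simp
    finally show ?thesis using T(4) by simp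
  qed
  define p where "p = embed_pmf f"
  have pmfp: "pmf p t = f t" for t unfolding p_def by (rule pmf_embed_pmf[OF fnn fint])
  have setp: "set_pmf p \<subseteq> T" using pmfp by (auto simp: set_pmf_eq f_def)
  have finp: "finite (set_pmf p)" using setp T(1) finite_subset by blast
  define \<mu> where "\<mu> = distr (measure_pmf p) borel (\<lambda>x. x)"
  have intmu: "integrable \<mu> F \<and> integral\<^sup>L \<mu> F = (\<Sum>t\<in>T. w t *\<^sub>R F t)"
    if Fm: "F \<in> borel_measurable borel" for F :: "real^'n \<Rightarrow> 'b::{banach,second_countable_topology}"
  proof
    show "integrable \<mu> F" unfolding \<mu>_def
      by (subst integrable_distr_eq) (auto intro: Fm integrable_measure_pmf_finite[OF finp])
    have "integral\<^sup>L \<mu> F = integral\<^sup>L (measure_pmf p) F" unfolding \<mu>_def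
      by (subst integral_distr) (auto intro: Fm)
    also have "\<dots> = (\<Sum>t\<in>T. pmf p t *\<^sub>R F t)"
      by (rule integral_measure_pmf[OF T(1)]) (use setp in auto)
    also have "\<dots> = (\<Sum>t\<in>T. w t *\<^sub>R F t)" by (rule sum.cong) (auto simp: pmfp f_def)
    finally show "integral\<^sup>L \<mu> F = (\<Sum>t\<in>T. w t *\<^sub>R F t)" .
  qed
  have zint: "integrable \<mu> (\<lambda>z. z) \<and> (\<integral>z. z \<partial>\<mu>) = 0" using intmu[of "\<lambda>z. z"] zz by simp
  have "\<mu> \<in> Mpc (g ` {..<M0} \<union> range (\<lambda>j z. z $ j))"
    unfolding Mpc_def
  proof (rule CollectI, intro conjI)
    show "prob_space \<mu>" unfolding \<mu>_def
      by (rule prob_space.prob_space_distr) (auto simp: prob_space_measure_pmf)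
    show "sets \<mu> = sets borel" unfolding \<mu>_def by simp
    show "integrable \<mu> (\<lambda>z. z)" "(\<integral>z. z \<partial>\<mu>) = 0" using zint by auto
    show "\<forall>F\<in>g ` {..<M0} \<union> range (\<lambda>j z. z $ j). integrable \<mu> F \<and> (\<integral>z. F z \<partial>\<mu>) = F (\<integral>z. z \<partial>\<mu>)"
    proof
    fix F assume "F \<in> g ` {..<M0} \<union> range (\<lambda>j z. z $ j)"
    then consider k where "k < M0" "F = g k" | j where "F = (\<lambda>z. z $ j)" by auto
    then show "integrable \<mu> F \<and> (\<integral>z. F z \<partial>\<mu>) = F (\<integral>z. z \<partial>\<mu>)"
    proof cases
      case 1
      have "g k \<in> borel_measurable borel" using hom 1 hom_meas by blast
      then show ?thesis using intmu[of "g k"] 1 gz g0 zint by simp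
    next
      case 2
      have m: "(\<lambda>z::real^'n. z $ j) \<in> borel_measurable borel"
        by (intro borel_measurable_continuous_onI continuous_intros)
      have "(\<Sum>t\<in>T. w t * t $ j) = (\<Sum>t\<in>T. w t *\<^sub>R t) $ j" by simp
      also have "\<dots> = 0" using zz by simp
      finally have "(\<Sum>t\<in>T. w t * t $ j) = 0" .
      then show ?thesis using intmu[OF m] 2 zint by simp
    qed
    qed
  qed
  moreover have "\<not> (\<exists>y. \<mu> = return borel y)"
  proof
    assume "\<exists>y. \<mu> = return borel y"
    then obtain y where y: "\<mu> = return borel y" by blast
    have "(\<integral>z. z \<partial>\<mu>) = y" unfolding y by (subst integral_return) auto
    then have y0: "y = 0" using zint by simp
    have "emeasure \<mu> {0} = 1" unfolding y y0 by (simp add: emeasure_return)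
    moreover have "emeasure \<mu> {0} = emeasure (measure_pmf p) {0}" unfolding \<mu>_def
      by (subst emeasure_distr) auto
    moreover have "emeasure (measure_pmf p) {0} = 0"
      using T(2) by (auto simp: emeasure_pmf_single pmfp f_def)
    ultimately show False by simp
  qed
  ultimately show ?thesis by blast
qed
end
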